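(* Let $G$ be a group with finite generating set $S$, let $H$ be a subgroup of $G$ with finite generating set $T$, and let $w\in(S\cup S^{-1})^+$. Then: (i) the infinite snake, ouroboros and snake reachability problems for $(H,T)$ many-one reduce to the respective problems for $(G,S\cup T)$; (ii) the infinite snake, ouroboros and snake reachability problems for $(G,S)$ many-one reduce to the respective problems for $(G,S\cup\{\overline{w}\})$.
   Context: $\overline{w}$ is the element of $G$ represented by $w$. For a group $K$ with finite generating set $U$, a tileset graph for $(K,U)$ is a finite multigraph $\Gamma=(A,B)$ whose edges are triples $(a,a',u)$ with $a,a'\in A$, $u\in U\cup U^{-1}$, such that $(a,a',u)\in B$ implies $(a',a,u^{-1})\in B$. For $I$ equal to $\mathbb{Z}$, $\mathbb{N}$ or an integer interval, a $\Gamma$-snake is a pair $(\omega,\zeta)$, $\omega:I\to K$ injective, $\zeta:I\to A$, such that whenever $i,i+1\in I$: $d\omega_i:=\omega(i)^{-1}\omega(i+1)\in U\cup U^{-1}$ and $(\zeta(i),\zeta(i+1),d\omega_i)\in B$. A $\Gamma$-ouroboros is such a pair on $\{0,\dots,n\}$, $n\ge3$, with $\omega$ injective on $\{0,\dots,n-1\}$ and $\omega(n)=\omega(0)$. Problems (input $\Gamma$): infinite snake problem — does a $\Gamma$-snake on $\mathbb{Z}$ exist; ouroboros problem — does a $\Gamma$-ouroboros exist; snake reachability problem — given additionally $p,q\in K$, does a $\Gamma$-snake on some $\{0,\dots,n\}$ with $\omega(0)=p$, $\omega(n)=q$ exist. *)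

theory Defs
  imports "HOL-Algebra.Generated_Groups" "HOL-Library.Nat_Bijection"
begin

inductive recfn :: "nat \<Rightarrow> (nat list \<Rightarrow> nat) \<Rightarrow> bool" where
  rf_zero: "recfn n (\<lambda>_. 0)"
| rf_succ: "recfn 1 (\<lambda>xs. Suc (hd xs))"
| rf_proj: "i < n \<Longrightarrow> recfn n (\<lambda>xs. xs ! i)"
| rf_comp: "recfn m f \<Longrightarrow> length gs = m \<Longrightarrow> (\<forall>g\<in>set gs. recfn n g)
            \<Longrightarrow> recfn n (\<lambda>xs. f (map (\<lambda>g. g xs) gs))"
| rf_prim: "recfn n g \<Longrightarrow> recfn (n + 2) h
            \<Longrightarrow> recfn (Suc n) (\<lambda>xs. rec_nat (g (tl xs)) (\<lambda>k r. h (k # r # tl xs)) (hd xs))"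
| rf_mu: "recfn (Suc n) g \<Longrightarrow> (\<forall>xs. length xs = n \<longrightarrow> (\<exists>y. g (y # xs) = 0))
          \<Longrightarrow> recfn n (\<lambda>xs. LEAST y. g (y # xs) = 0)"

definition computable :: "(nat \<Rightarrow> nat) \<Rightarrow> bool" where
  "computable f \<longleftrightarrow> (\<exists>g. recfn 1 g \<and> (\<forall>x. g [x] = f x))"

definition many_one_reducible :: "nat set \<Rightarrow> nat set \<Rightarrow> bool" where
  "many_one_reducible P Q \<longleftrightarrow> (\<exists>f. computable f \<and> (\<forall>x. x \<in> P \<longleftrightarrow> f x \<in> Q))"

text \<open>A letter code l denotes gens!(l div 2) if l is even, its inverse if l is odd.\<close>

definition letter_ok :: "'a list \<Rightarrow> nat \<Rightarrow> bool" where
  "letter_ok gens l \<longleftrightarrow> l div 2 < length gens"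

definition letter_val :: "('a, 'b) monoid_scheme \<Rightarrow> 'a list \<Rightarrow> nat \<Rightarrow> 'a" where
  "letter_val G gens l = (if even l then gens ! (l div 2) else inv\<^bsub>G\<^esub> (gens ! (l div 2)))"

definition word_val :: "('a, 'b) monoid_scheme \<Rightarrow> 'a list \<Rightarrow> nat list \<Rightarrow> 'a" where
  "word_val G gens ws = foldr (\<lambda>l x. letter_val G gens l \<otimes>\<^bsub>G\<^esub> x) ws \<one>\<^bsub>G\<^esub>"

definition gen_set :: "('a, 'b) monoid_scheme \<Rightarrow> 'a list \<Rightarrow> 'a set" where
  "gen_set G gens = set gens \<union> (\<lambda>u. inv\<^bsub>G\<^esub> u) ` set gens"

definition dec_graph :: "nat \<Rightarrow> nat \<times> (nat \<times> nat \<times> nat) list" where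
  "dec_graph c = (case prod_decode c of (n, e) \<Rightarrow>
     (n, map (\<lambda>x. case prod_decode x of (a, r) \<Rightarrow> (case prod_decode r of (a', l) \<Rightarrow> (a, a', l)))
             (list_decode e)))"

definition graph_vertices :: "nat \<Rightarrow> nat set" where
  "graph_vertices c = {0..<fst (dec_graph c)}"

definition graph_edges :: "('a, 'b) monoid_scheme \<Rightarrow> 'a list \<Rightarrow> nat \<Rightarrow> (nat \<times> nat \<times> 'a) set" where
  "graph_edges G gens c = {(a, a', letter_val G gens l) | a a' l. (a, a', l) \<in> set (snd (dec_graph c))}"

definition graph_ok :: "('a, 'b) monoid_scheme \<Rightarrow> 'a list \<Rightarrow> nat \<Rightarrow> bool" where
  "graph_ok G gens c \<longleftrightarrow>
     (\<forall>(a, a', l) \<in> set (snd (dec_graph c)). a < fst (dec_graph c) \<and> a' < fst (dec_graph c) \<and> letter_ok gens l)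
   \<and> (\<forall>(a, a', u) \<in> graph_edges G gens c. (a', a, inv\<^bsub>G\<^esub> u) \<in> graph_edges G gens c)"

definition snake_step :: "('a, 'b) monoid_scheme \<Rightarrow> 'a list \<Rightarrow> (nat \<times> nat \<times> 'a) set
    \<Rightarrow> (int \<Rightarrow> 'a) \<Rightarrow> (int \<Rightarrow> nat) \<Rightarrow> int \<Rightarrow> bool" where
  "snake_step G gens B \<omega> \<zeta> i \<longleftrightarrow>
     inv\<^bsub>G\<^esub> (\<omega> i) \<otimes>\<^bsub>G\<^esub> \<omega> (i + 1) \<in> gen_set G gens
   \<and> (\<zeta> i, \<zeta> (i + 1), inv\<^bsub>G\<^esub> (\<omega> i) \<otimes>\<^bsub>G\<^esub> \<omega> (i + 1)) \<in> B"

definition snake_on :: "('a, 'b) monoid_scheme \<Rightarrow> 'a list \<Rightarrow> nat set \<Rightarrow> (nat \<times> nat \<times> 'a) set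
    \<Rightarrow> int set \<Rightarrow> (int \<Rightarrow> 'a) \<Rightarrow> (int \<Rightarrow> nat) \<Rightarrow> bool" where
  "snake_on G gens A B I \<omega> \<zeta> \<longleftrightarrow>
     (\<forall>i\<in>I. \<omega> i \<in> carrier G \<and> \<zeta> i \<in> A) \<and> inj_on \<omega> I
   \<and> (\<forall>i. i \<in> I \<longrightarrow> i + 1 \<in> I \<longrightarrow> snake_step G gens B \<omega> \<zeta> i)"

definition ouroboros :: "('a, 'b) monoid_scheme \<Rightarrow> 'a list \<Rightarrow> nat set \<Rightarrow> (nat \<times> nat \<times> 'a) set
    \<Rightarrow> int \<Rightarrow> (int \<Rightarrow> 'a) \<Rightarrow> (int \<Rightarrow> nat) \<Rightarrow> bool" where
  "ouroboros G gens A B n \<omega> \<zeta> \<longleftrightarrow> n \<ge> 3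
   \<and> (\<forall>i\<in>{0..n}. \<omega> i \<in> carrier G \<and> \<zeta> i \<in> A) \<and> inj_on \<omega> {0..n-1} \<and> \<omega> n = \<omega> 0
   \<and> (\<forall>i. i \<in> {0..n} \<longrightarrow> i + 1 \<in> {0..n} \<longrightarrow> snake_step G gens B \<omega> \<zeta> i)"

definition infinite_snake_problem :: "('a, 'b) monoid_scheme \<Rightarrow> 'a list \<Rightarrow> nat set" where
  "infinite_snake_problem G gens = {c. graph_ok G gens c \<and>
     (\<exists>\<omega> \<zeta>. snake_on G gens (graph_vertices c) (graph_edges G gens c) UNIV \<omega> \<zeta>)}"

definition ouroboros_problem :: "('a, 'b) monoid_scheme \<Rightarrow> 'a list \<Rightarrow> nat set" where
  "ouroboros_problem G gens = {c. graph_ok G gens c \<and>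
     (\<exists>n \<omega> \<zeta>. ouroboros G gens (graph_vertices c) (graph_edges G gens c) n \<omega> \<zeta>)}"

definition snake_reachability_problem :: "('a, 'b) monoid_scheme \<Rightarrow> 'a list \<Rightarrow> nat set" where
  "snake_reachability_problem G gens = {c. case prod_decode c of (g, r) \<Rightarrow>
     (case prod_decode r of (pc, qc) \<Rightarrow>
       graph_ok G gens g \<and> (\<forall>l \<in> set (list_decode pc) \<union> set (list_decode qc). letter_ok gens l) \<and>
       (\<exists>n \<omega> \<zeta>. n \<ge> 0 \<and> snake_on G gens (graph_vertices g) (graph_edges G gens g) {0..n} \<omega> \<zeta>
          \<and> \<omega> 0 = word_val G gens (list_decode pc) \<and> \<omega> n = word_val G gens (list_decode qc)))}"

end

theory Submission
  imports Defs
begin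


definition rc :: "nat \<Rightarrow> (nat list \<Rightarrow> nat) \<Rightarrow> bool" where
  "rc n f \<longleftrightarrow> (\<exists>g. recfn n g \<and> (\<forall>xs. length xs = n \<longrightarrow> g xs = f xs))"

lemma rc_cong: "rc n f \<Longrightarrow> (\<And>xs. length xs = n \<Longrightarrow> f xs = g xs) \<Longrightarrow> rc n g"
  unfolding rc_def by metis

lemma rc_cong': "rc m f \<Longrightarrow> m = n \<Longrightarrow> (\<And>xs. length xs = n \<Longrightarrow> f xs = g xs) \<Longrightarrow> rc n g"
  unfolding rc_def by metis

lemma rc_zero: "rc n (\<lambda>_. 0)"
  unfolding rc_def using rf_zero by blast

lemma rc_succ: "rc 1 (\<lambda>xs. Suc (hd xs))"
  unfolding rc_def using rf_succ by blast

lemma rc_proj: "i < n \<Longrightarrow> rc n (\<lambda>xs. xs ! i)"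
  unfolding rc_def using rf_proj by blast

lemma rc_list_wit:
  "(\<forall>g\<in>set gs. rc n g) \<Longrightarrow> \<exists>gs'. length gs' = length gs \<and> (\<forall>g\<in>set gs'. recfn n g)
     \<and> (\<forall>xs. length xs = n \<longrightarrow> map (\<lambda>g. g xs) gs' = map (\<lambda>g. g xs) gs)"
proof (induction gs)
  case Nil
  then show ?case by auto
next
  case (Cons g gs)
  then obtain gs' where gs': "length gs' = length gs" "\<forall>g\<in>set gs'. recfn n g"
     "\<forall>xs. length xs = n \<longrightarrow> map (\<lambda>g. g xs) gs' = map (\<lambda>g. g xs) gs" by auto
  from Cons.prems obtain g' where "recfn n g'" "\<forall>xs. length xs = n \<longrightarrow> g' xs = g xs"
    unfolding rc_def by auto
  then show ?case using gs' by (intro exI[of _ "g' # gs'"]) auto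
qed

lemma rc_comp: "rc m f \<Longrightarrow> length gs = m \<Longrightarrow> (\<forall>g\<in>set gs. rc n g)
   \<Longrightarrow> rc n (\<lambda>xs. f (map (\<lambda>g. g xs) gs))"
proof -
  assume f: "rc m f" and l: "length gs = m" and gs: "\<forall>g\<in>set gs. rc n g"
  obtain gs' where gs': "length gs' = length gs" "\<forall>g\<in>set gs'. recfn n g"
     "\<forall>xs. length xs = n \<longrightarrow> map (\<lambda>g. g xs) gs' = map (\<lambda>g. g xs) gs"
    using rc_list_wit[OF gs] by blast
  obtain f' where f': "recfn m f'" "\<forall>xs. length xs = m \<longrightarrow> f' xs = f xs"
    using f unfolding rc_def by auto
  have "recfn n (\<lambda>xs. f' (map (\<lambda>g. g xs) gs'))"
    using rf_comp[OF f'(1)] gs' l by auto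
  moreover have "\<forall>xs. length xs = n \<longrightarrow> f' (map (\<lambda>g. g xs) gs') = f (map (\<lambda>g. g xs) gs)"
    using gs'(3) f'(2) l by auto
  ultimately show ?thesis unfolding rc_def by blast
qed

lemma rec_nat_cong2:
  "(\<And>k r. h k r = h' k r) \<Longrightarrow> rec_nat a h m = rec_nat a h' m"
  by (induction m) auto

lemma rc_prim: "rc n g \<Longrightarrow> rc (n + 2) h
   \<Longrightarrow> rc (Suc n) (\<lambda>xs. rec_nat (g (tl xs)) (\<lambda>k r. h (k # r # tl xs)) (hd xs))"
proof -
  assume "rc n g" "rc (n + 2) h"
  then obtain g' h' where g': "recfn n g'" "\<forall>xs. length xs = n \<longrightarrow> g' xs = g xs"
    and h': "recfn (n+2) h'" "\<forall>xs. length xs = n + 2 \<longrightarrow> h' xs = h xs"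
    unfolding rc_def by auto
  have "recfn (Suc n) (\<lambda>xs. rec_nat (g' (tl xs)) (\<lambda>k r. h' (k # r # tl xs)) (hd xs))"
    using rf_prim[OF g'(1) h'(1)] .
  moreover have "rec_nat (g' (tl xs)) (\<lambda>k r. h' (k # r # tl xs)) (hd xs)
      = rec_nat (g (tl xs)) (\<lambda>k r. h (k # r # tl xs)) (hd xs)" if "length xs = Suc n" for xs
  proof -
    have "g' (tl xs) = g (tl xs)" using g'(2) that by auto
    moreover have "\<And>k r. h' (k # r # tl xs) = h (k # r # tl xs)" using h'(2) that by auto
    ultimately show ?thesis using rec_nat_cong2 by metis
  qed
  ultimately show ?thesis unfolding rc_def by blast
qed

lemma rc_mu: "rc (Suc n) g \<Longrightarrow> (\<forall>xs. length xs = n \<longrightarrow> (\<exists>y. g (y # xs) = 0))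
   \<Longrightarrow> rc n (\<lambda>xs. LEAST y. g (y # xs) = 0)"
proof -
  assume "rc (Suc n) g" and tot: "\<forall>xs. length xs = n \<longrightarrow> (\<exists>y. g (y # xs) = 0)"
  then obtain g' where g': "recfn (Suc n) g'" "\<forall>xs. length xs = Suc n \<longrightarrow> g' xs = g xs"
    unfolding rc_def by auto
  have eq: "g' (y # xs) = g (y # xs)" if "length xs = n" for xs y using g'(2) that by auto
  have "recfn n (\<lambda>xs. LEAST y. g' (y # xs) = 0)"
    using rf_mu[OF g'(1)] tot eq by auto
  moreover have "(LEAST y. g' (y # xs) = 0) = (LEAST y. g (y # xs) = 0)" if "length xs = n" for xs
    using eq[OF that] by simp
  ultimately show ?thesis unfolding rc_def by blast
qed

lemma rc_const: "rc n (\<lambda>_. k)"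
proof (induction k)
  case 0 then show ?case by (rule rc_zero)
next
  case (Suc k)
  have "rc n (\<lambda>xs. Suc (hd (map (\<lambda>g. g xs) [\<lambda>_. k])))"
    by (rule rc_comp[OF rc_succ]) (use Suc in auto)
  then show ?case by simp
qed

lemma rc_comp1: "rc 1 f \<Longrightarrow> rc n g \<Longrightarrow> rc n (\<lambda>xs. f [g xs])"
  using rc_comp[of 1 f "[g]" n] by simp

lemma rc_comp2: "rc 2 f \<Longrightarrow> rc n g1 \<Longrightarrow> rc n g2 \<Longrightarrow> rc n (\<lambda>xs. f [g1 xs, g2 xs])"
  using rc_comp[of 2 f "[g1, g2]" n] by simp

lemma rc_comp3: "rc 3 f \<Longrightarrow> rc n g1 \<Longrightarrow> rc n g2 \<Longrightarrow> rc n g3 \<Longrightarrow> rc n (\<lambda>xs. f [g1 xs, g2 xs, g3 xs])"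
  using rc_comp[of 3 f "[g1, g2, g3]" n] by (simp add: numeral_3_eq_3)

lemma len1: "length xs = Suc 0 \<Longrightarrow> xs = [hd xs]"
  by (cases xs) auto
lemma len2: "length xs = 2 \<Longrightarrow> xs = [xs!0, xs!1]"
  by (cases xs; cases "tl xs") auto
lemma len3: "length xs = 3 \<Longrightarrow> xs = [xs!0, xs!1, xs!2]"
  by (cases xs; cases "tl xs"; cases "tl (tl xs)") (auto simp: numeral_3_eq_3)

definition U1 :: "(nat \<Rightarrow> nat) \<Rightarrow> bool" where "U1 f \<longleftrightarrow> rc 1 (\<lambda>xs. f (hd xs))"
definition B2 :: "(nat \<Rightarrow> nat \<Rightarrow> nat) \<Rightarrow> bool" where "B2 f \<longleftrightarrow> rc 2 (\<lambda>xs. f (xs!0) (xs!1))"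
definition T3 :: "(nat \<Rightarrow> nat \<Rightarrow> nat \<Rightarrow> nat) \<Rightarrow> bool" where
  "T3 f \<longleftrightarrow> rc 3 (\<lambda>xs. f (xs!0) (xs!1) (xs!2))"

lemma U1_app: "U1 f \<Longrightarrow> rc n g \<Longrightarrow> rc n (\<lambda>xs. f (g xs))"
  unfolding U1_def by (drule (1) rc_comp1) simp

lemma B2_app: "B2 f \<Longrightarrow> rc n g1 \<Longrightarrow> rc n g2 \<Longrightarrow> rc n (\<lambda>xs. f (g1 xs) (g2 xs))"
  unfolding B2_def by (drule (2) rc_comp2) simp

lemma T3_app: "T3 f \<Longrightarrow> rc n g1 \<Longrightarrow> rc n g2 \<Longrightarrow> rc n g3 \<Longrightarrow> rc n (\<lambda>xs. f (g1 xs) (g2 xs) (g3 xs))"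
  unfolding T3_def by (drule (3) rc_comp3) simp

lemma rc_hd: "rc 1 hd"
  by (rule rc_cong[OF rc_proj[of 0 1]]) (auto simp: length_Suc_conv)

lemma U1_computable: "U1 f \<Longrightarrow> computable f"
  unfolding U1_def rc_def computable_def by force

lemma B2_add: "B2 (+)"
proof -
  have X: "rc (Suc 1) (\<lambda>xs. rec_nat ((\<lambda>ys. ys!0) (tl xs)) (\<lambda>k r. (\<lambda>ys. Suc (ys!1)) (k # r # tl xs)) (hd xs))"
    by (rule rc_prim[OF rc_proj]) (auto intro: rc_comp1[OF rc_succ rc_proj, simplified])
  have Y: "rec_nat b (\<lambda>k r. Suc r) a = a + b" for a b :: nat by (induction a) auto
  show ?thesis unfolding B2_def
    by (rule rc_cong'[OF X]) (auto simp: length_Suc_conv numeral_2_eq_2 Y)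
qed


lemma rc_Suc: assumes "rc n g" shows "rc n (\<lambda>xs. Suc (g xs))"
  using U1_app[of Suc n g] rc_succ assms unfolding U1_def by simp
lemma rc_add: "rc n g \<Longrightarrow> rc n h \<Longrightarrow> rc n (\<lambda>xs. g xs + h xs)"
  by (rule B2_app[OF B2_add])

lemma U1_pred: "U1 (\<lambda>x. x - 1)"
proof -
  have X: "rc (Suc 0) (\<lambda>xs. rec_nat ((\<lambda>_. 0) (tl xs)) (\<lambda>k r. (\<lambda>ys. ys!0) (k # r # tl xs)) (hd xs))"
    by (rule rc_prim[OF rc_zero rc_proj]) simp
  have Y: "rec_nat 0 (\<lambda>k r. k) a = a - 1" for a :: nat by (cases a) auto
  show ?thesis unfolding U1_def
    by (rule rc_cong'[OF X]) (simp_all add: Y)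
qed

lemma B2_sub: "B2 (\<lambda>a b. a - b)"
proof -
  have P: "rc (1 + 2) (\<lambda>ys. ys!1 - 1)"
    by (rule U1_app[OF U1_pred rc_proj]) simp
  have X: "rc (Suc 1) (\<lambda>xs. rec_nat ((\<lambda>ys. ys!0) (tl xs)) (\<lambda>k r. (\<lambda>ys. ys!1 - 1) (k # r # tl xs)) (hd xs))"
    by (rule rc_prim[OF rc_proj P]) simp
  have Y: "rec_nat b (\<lambda>k r. r - Suc 0) a = b - a" for a b :: nat by (induction a) auto
  have Z: "rc 2 (\<lambda>xs. xs!1 - xs!0)"
    by (rule rc_cong'[OF X]) (auto simp: length_Suc_conv numeral_2_eq_2 Y)
  have "rc 2 (\<lambda>xs. (\<lambda>ys. ys!1 - ys!0) [xs!1, xs!0])"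
    by (rule rc_comp2[OF Z rc_proj rc_proj]) simp_all
  then show ?thesis unfolding B2_def by simp
qed
lemma rc_sub: "rc n g \<Longrightarrow> rc n h \<Longrightarrow> rc n (\<lambda>xs. g xs - h xs)"
  by (rule B2_app[OF B2_sub])

lemma U1_tri: "U1 triangle"
proof -
  have P: "rc (0 + 2) (\<lambda>ys. ys!1 + Suc (ys!0))"
    by (rule rc_add[OF rc_proj rc_Suc[OF rc_proj]]) simp_all
  have X: "rc (Suc 0) (\<lambda>xs. rec_nat ((\<lambda>_. 0) (tl xs)) (\<lambda>k r. (\<lambda>ys. ys!1 + Suc (ys!0)) (k # r # tl xs)) (hd xs))"
    by (rule rc_prim[OF rc_zero P])
  have Y: "rec_nat 0 (\<lambda>k r. Suc (r + k)) a = triangle a" for a :: nat by (induction a) auto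
  show ?thesis unfolding U1_def
    by (rule rc_cong'[OF X]) (simp_all add: Y)
qed

lemma T3_if: "T3 (\<lambda>c a b. if c = 0 then a else b)"
proof -
  have X: "rc (Suc 2) (\<lambda>xs. rec_nat ((\<lambda>ys. ys!0) (tl xs)) (\<lambda>k r. (\<lambda>ys. ys!3) (k # r # tl xs)) (hd xs))"
    by (rule rc_prim[OF rc_proj rc_proj]) simp_all
  have Y: "rec_nat a (\<lambda>k r. b) c = (if c = 0 then a else b)" for a b c :: nat by (cases c) auto
  show ?thesis unfolding T3_def
    by (rule rc_cong'[OF X]) (auto simp: length_Suc_conv numeral_3_eq_3 Y)
qed

lemma rc_tri: "rc n g \<Longrightarrow> rc n (\<lambda>xs. triangle (g xs))"
  by (rule U1_app[OF U1_tri])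
lemma rc_if: "rc n c \<Longrightarrow> rc n a \<Longrightarrow> rc n b \<Longrightarrow> rc n (\<lambda>xs. if c xs = 0 then a xs else b xs)"
  by (rule T3_app[OF T3_if])
lemma rc_penc: "rc n g \<Longrightarrow> rc n h \<Longrightarrow> rc n (\<lambda>xs. prod_encode (g xs, h xs))"
  unfolding prod_encode_def by (simp add: rc_add rc_tri)

definition pK :: "nat \<Rightarrow> nat" where "pK c = (LEAST y. Suc c - triangle (Suc y) = 0)"

lemma tri_ge: "n \<le> triangle n"
  by (induction n) auto

lemma pK_prop: "triangle (pK c) \<le> c \<and> c < triangle (Suc (pK c))"
proof -
  have ex: "Suc c - triangle (Suc c) = 0" using tri_ge[of "Suc c"] by simp
  have 1: "c < triangle (Suc (pK c))"
    using LeastI[of "\<lambda>y. Suc c - triangle (Suc y) = 0", OF ex] unfolding pK_def by simp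
  have 2: "triangle (pK c) \<le> c"
  proof (cases "pK c")
    case 0 then show ?thesis by simp
  next
    case (Suc k)
    have "\<not> (Suc c - triangle (Suc k) = 0)"
      using not_less_Least[of k "\<lambda>y. Suc c - triangle (Suc y) = 0"] Suc unfolding pK_def by simp
    then show ?thesis using Suc by simp
  qed
  show ?thesis using 1 2 by simp
qed

lemma prod_decode_pK: "prod_decode c = (c - triangle (pK c), pK c - (c - triangle (pK c)))"
proof -
  have "prod_encode (c - triangle (pK c), pK c - (c - triangle (pK c))) = c"
    using pK_prop[of c] unfolding prod_encode_def by auto
  then show ?thesis by (metis prod_encode_inverse)
qed

lemma U1_pK: "U1 pK"
proof -
  have R: "rc (Suc 1) (\<lambda>ys. Suc (ys ! 1) - triangle (Suc (ys ! 0)))"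
    by (rule rc_sub[OF rc_Suc[OF rc_proj] rc_tri[OF rc_Suc[OF rc_proj]]]) simp_all
  have T: "\<forall>xs. length xs = 1 \<longrightarrow> (\<exists>y. (\<lambda>ys. Suc (ys ! 1) - triangle (Suc (ys ! 0))) (y # xs) = 0)"
  proof (intro allI impI)
    fix xs :: "nat list" assume "length xs = 1"
    then obtain a where "xs = [a]" by (auto simp: length_Suc_conv)
    then show "\<exists>y. (\<lambda>ys. Suc (ys ! 1) - triangle (Suc (ys ! 0))) (y # xs) = 0"
      using tri_ge[of "Suc a"] by (intro exI[of _ a]) simp
  qed
  have X: "rc 1 (\<lambda>xs. LEAST y. (\<lambda>ys. Suc (ys!1) - triangle (Suc (ys!0))) (y # xs) = 0)"
    by (rule rc_mu[OF R T])
  show ?thesis unfolding U1_def pK_def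
    by (rule rc_cong'[OF X]) (auto simp: length_Suc_conv)
qed

lemma rc_pK: "rc n g \<Longrightarrow> rc n (\<lambda>xs. pK (g xs))"
  by (rule U1_app[OF U1_pK])

lemma rc_fst: "rc n g \<Longrightarrow> rc n (\<lambda>xs. fst (prod_decode (g xs)))"
  unfolding prod_decode_pK by (simp add: rc_sub rc_tri rc_pK)
lemma rc_snd: "rc n g \<Longrightarrow> rc n (\<lambda>xs. snd (prod_decode (g xs)))"
  unfolding prod_decode_pK by (simp add: rc_sub rc_tri rc_pK)

lemma rec_nat_funpow: "rec_nat s (\<lambda>k r. f r) k = (f ^^ k) s"
  by (induction k) auto

lemma rc_iter: "U1 f \<Longrightarrow> rc n k \<Longrightarrow> rc n s \<Longrightarrow> rc n (\<lambda>xs. (f ^^ k xs) (s xs))"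
proof -
  assume f: "U1 f" and k: "rc n k" and s: "rc n s"
  have P: "rc (1 + 2) (\<lambda>ys. f (ys!1))" by (rule U1_app[OF f rc_proj]) simp
  have X: "rc (Suc 1) (\<lambda>xs. rec_nat ((\<lambda>ys. ys!0) (tl xs)) (\<lambda>k r. (\<lambda>ys. f (ys!1)) (k # r # tl xs)) (hd xs))"
    by (rule rc_prim[OF rc_proj P]) simp
  have Z: "B2 (\<lambda>a b. (f ^^ a) b)" unfolding B2_def
    by (rule rc_cong'[OF X]) (auto simp: length_Suc_conv numeral_2_eq_2 rec_nat_funpow)
  show ?thesis by (rule B2_app[OF Z k s])
qed

definition lstep :: "(nat \<Rightarrow> nat) \<Rightarrow> nat \<Rightarrow> nat" where
  "lstep h s = (if fst (prod_decode s) = 0 then s else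
     prod_encode (snd (prod_decode (fst (prod_decode s) - 1)),
       Suc (prod_encode (h (fst (prod_decode (fst (prod_decode s) - 1))), snd (prod_decode s)))))"

definition lrev :: "(nat \<Rightarrow> nat) \<Rightarrow> nat \<Rightarrow> nat" where
  "lrev h e = snd (prod_decode ((lstep h ^^ e) (prod_encode (e, 0))))"

definition lmap :: "(nat \<Rightarrow> nat) \<Rightarrow> nat \<Rightarrow> nat" where
  "lmap h e = lrev id (lrev h e)"

lemma funpow_fix: "f s = s \<Longrightarrow> (f ^^ k) s = s"
  by (induction k) auto

lemma lstep_iter: "length xs \<le> k \<Longrightarrow>
  (lstep h ^^ k) (prod_encode (list_encode xs, list_encode acc)) = prod_encode (0, list_encode (rev (map h xs) @ acc))"
proof (induction xs arbitrary: k acc)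
  case Nil
  have "lstep h (prod_encode (0, list_encode acc)) = prod_encode (0, list_encode acc)"
    by (simp add: lstep_def)
  then show ?case using funpow_fix[of "lstep h" "prod_encode (0, list_encode acc)" k] by simp
next
  case (Cons x xs)
  then obtain k' where k: "k = Suc k'" "length xs \<le> k'" by (cases k) auto
  have "lstep h (prod_encode (list_encode (x # xs), list_encode acc))
      = prod_encode (list_encode xs, list_encode (h x # acc))"
    by (simp add: lstep_def)
  then show ?case using Cons.IH[OF k(2), of "h x # acc"] k(1)
    by (simp add: funpow_Suc_right del: funpow.simps)
qed

lemma len_le_enc: "length xs \<le> list_encode xs"
proof (induction xs)
  case (Cons x xs)
  then show ?case using le_prod_encode_2[of "list_encode xs" x] by simp
qed simp

lemma lrev_enc: "lrev h (list_encode xs) = list_encode (rev (map h xs))"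
  unfolding lrev_def using lstep_iter[OF len_le_enc, of xs h "[]"] by simp

lemma lmap_eq: "lmap h e = list_encode (map h (list_decode e))"
proof -
  have "lmap h (list_encode (list_decode e)) = list_encode (map h (list_decode e))"
    unfolding lmap_def lrev_enc by (simp add: rev_map)
  then show ?thesis by simp
qed

lemma rc_hd1: "rc 1 (\<lambda>xs. hd xs)" using rc_hd by simp

lemma U1_lstep: assumes h: "U1 h" shows "U1 (lstep h)"
proof -
  have H: "rc n g \<Longrightarrow> rc n (\<lambda>xs. h (g xs))" for n g by (rule U1_app[OF h])
  show ?thesis
  unfolding U1_def lstep_def
  by (intro rc_if rc_fst rc_snd rc_penc rc_Suc rc_sub rc_const rc_hd1 H)
qed

lemma U1_lrev: assumes h: "U1 h" shows "U1 (lrev h)"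
  unfolding U1_def lrev_def
  by (intro rc_snd rc_iter U1_lstep rc_penc rc_hd1 rc_const h)

lemma U1_id: "U1 id" unfolding U1_def using rc_hd by (simp add: id_def)

lemma U1_lmap: assumes h: "U1 h" shows "U1 (lmap h)"
proof -
  have "rc 1 (\<lambda>xs. lrev h (hd xs))" using U1_lrev[OF h] unfolding U1_def .
  then show ?thesis unfolding lmap_def U1_def by (rule U1_app[OF U1_lrev[OF U1_id]])
qed

definition dmap :: "(nat \<Rightarrow> nat) \<Rightarrow> nat \<Rightarrow> nat" where
  "dmap \<phi> x = prod_encode (fst (prod_decode x), prod_encode (fst (prod_decode (snd (prod_decode x))),
      \<phi> (snd (prod_decode (snd (prod_decode x))))))"

definition gmap :: "(nat \<Rightarrow> nat) \<Rightarrow> nat \<Rightarrow> nat" where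
  "gmap \<phi> c = prod_encode (fst (prod_decode c), lmap (dmap \<phi>) (snd (prod_decode c)))"

definition rmap :: "(nat \<Rightarrow> nat) \<Rightarrow> nat \<Rightarrow> nat" where
  "rmap \<phi> c = prod_encode (gmap \<phi> (fst (prod_decode c)),
     prod_encode (lmap \<phi> (fst (prod_decode (snd (prod_decode c)))), lmap \<phi> (snd (prod_decode (snd (prod_decode c))))))"

lemma U1_dmap: assumes h: "U1 \<phi>" shows "U1 (dmap \<phi>)"
proof -
  have H: "rc n g \<Longrightarrow> rc n (\<lambda>xs. \<phi> (g xs))" for n g by (rule U1_app[OF h])
  show ?thesis unfolding U1_def dmap_def
    by (intro rc_fst rc_snd rc_penc rc_hd1 H)
qed

lemma U1_gmap: assumes h: "U1 \<phi>" shows "U1 (gmap \<phi>)"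
proof -
  have H: "rc n g \<Longrightarrow> rc n (\<lambda>xs. lmap (dmap \<phi>) (g xs))" for n g by (rule U1_app[OF U1_lmap[OF U1_dmap[OF h]]])
  show ?thesis unfolding U1_def gmap_def
    by (intro rc_fst rc_snd rc_penc rc_hd1 H)
qed

lemma U1_rmap: assumes h: "U1 \<phi>" shows "U1 (rmap \<phi>)"
proof -
  have H: "rc n g \<Longrightarrow> rc n (\<lambda>xs. lmap \<phi> (g xs))" for n g by (rule U1_app[OF U1_lmap[OF h]])
  have H2: "rc n g \<Longrightarrow> rc n (\<lambda>xs. gmap \<phi> (g xs))" for n g by (rule U1_app[OF U1_gmap[OF h]])
  show ?thesis unfolding U1_def rmap_def
    by (intro rc_fst rc_snd rc_penc rc_hd1 H H2)
qed

lemma dec_graph_gmap: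
  "dec_graph (gmap \<phi> c) = (fst (dec_graph c), map (\<lambda>(a, a', l). (a, a', \<phi> l)) (snd (dec_graph c)))"
proof -
  obtain n e where ne: "prod_decode c = (n, e)" by fastforce
  have "(case prod_decode (dmap \<phi> x) of (a, r) \<Rightarrow> (case prod_decode r of (a', l) \<Rightarrow> (a, a', l)))
     = (\<lambda>(a, a', l). (a, a', \<phi> l)) (case prod_decode x of (a, r) \<Rightarrow> (case prod_decode r of (a', l) \<Rightarrow> (a, a', l)))" for x
    unfolding dmap_def by (simp split: prod.splits)
  then show ?thesis
    unfolding dec_graph_def gmap_def using ne by (simp add: lmap_eq)
qed

lemma decode_rmap:
  "prod_decode (rmap \<phi> c) = (case prod_decode c of (g, r) \<Rightarrow> case prod_decode r of (pc, qc) \<Rightarrow>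
      (gmap \<phi> g, prod_encode (lmap \<phi> pc, lmap \<phi> qc)))"
  unfolding rmap_def by (simp split: prod.splits)

lemma U1_plus: "U1 (\<lambda>l. l + k)"
  unfolding U1_def by (intro rc_add rc_hd1 rc_const)

lemma U1_ifless: "U1 (\<lambda>l. if l < k then l else l + 2)"
proof -
  have "rc 1 (\<lambda>xs. if Suc (hd xs) - k = 0 then hd xs else hd xs + 2)"
    by (intro rc_if rc_sub rc_Suc rc_add rc_hd1 rc_const)
  then show ?thesis unfolding U1_def
    by (rule rc_cong) auto
qed


lemma gen_mem: "letter_ok gens l \<Longrightarrow> letter_val M gens l \<in> gen_set M gens"
  unfolding letter_ok_def letter_val_def gen_set_def by auto

definition gok1 :: "'a list \<Rightarrow> nat \<Rightarrow> bool" where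
  "gok1 gens c \<longleftrightarrow> (\<forall>(a, a', l) \<in> set (snd (dec_graph c)). a < fst (dec_graph c) \<and> a' < fst (dec_graph c) \<and> letter_ok gens l)"

lemma graph_ok_alt: "graph_ok G gens c \<longleftrightarrow> gok1 gens c \<and> (\<forall>(a, a', u) \<in> graph_edges G gens c. (a', a, inv\<^bsub>G\<^esub> u) \<in> graph_edges G gens c)"
  unfolding graph_ok_def gok1_def by simp


lemma (in group) tr_inc: "g \<in> carrier G \<Longrightarrow> x \<in> carrier G \<Longrightarrow> y \<in> carrier G \<Longrightarrow>
   inv (inv g \<otimes> x) \<otimes> (inv g \<otimes> y) = inv x \<otimes> y"
  by (simp add: inv_mult_group m_assoc[symmetric]) (simp add: m_assoc)

lemma tr_snake:
  assumes grp: "group G" and sn: "snake_on G U A B I \<omega> \<zeta>" and z: "\<omega> 0 \<in> carrier G"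
  shows "snake_on G U A B I (\<lambda>i. inv\<^bsub>G\<^esub> (\<omega> 0) \<otimes>\<^bsub>G\<^esub> \<omega> i) \<zeta>"
proof -
  interpret g: group G by (rule grp)
  have c: "\<forall>i\<in>I. \<omega> i \<in> carrier G" using sn unfolding snake_on_def by auto
  have inj: "inj_on (\<lambda>i. inv\<^bsub>G\<^esub> (\<omega> 0) \<otimes>\<^bsub>G\<^esub> \<omega> i) I"
    using sn c z unfolding snake_on_def inj_on_def by simp
  have "snake_step G U B (\<lambda>i. inv\<^bsub>G\<^esub> (\<omega> 0) \<otimes>\<^bsub>G\<^esub> \<omega> i) \<zeta> i" if "i \<in> I" "i + 1 \<in> I" for i
    using sn that c z g.tr_inc unfolding snake_on_def snake_step_def by simp
  then show ?thesis using sn inj c z unfolding snake_on_def by simp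
qed

lemma tr_ouro:
  assumes grp: "group G" and sn: "ouroboros G U A B n \<omega> \<zeta>"
  shows "ouroboros G U A B n (\<lambda>i. inv\<^bsub>G\<^esub> (\<omega> 0) \<otimes>\<^bsub>G\<^esub> \<omega> i) \<zeta>"
proof -
  interpret g: group G by (rule grp)
  have c: "\<forall>i\<in>{0..n}. \<omega> i \<in> carrier G" using sn unfolding ouroboros_def by auto
  have z: "\<omega> 0 \<in> carrier G" using c sn unfolding ouroboros_def by auto
  have c': "\<forall>i\<in>{0..n-1}. \<omega> i \<in> carrier G" using c by auto
  have inj: "inj_on (\<lambda>i. inv\<^bsub>G\<^esub> (\<omega> 0) \<otimes>\<^bsub>G\<^esub> \<omega> i) {0..n-1}"
    using sn c' z unfolding ouroboros_def inj_on_def by simp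
  have "snake_step G U B (\<lambda>i. inv\<^bsub>G\<^esub> (\<omega> 0) \<otimes>\<^bsub>G\<^esub> \<omega> i) \<zeta> i" if "i \<in> {0..n}" "i + 1 \<in> {0..n}" for i
  proof -
    have "snake_step G U B \<omega> \<zeta> i" using sn that unfolding ouroboros_def by blast
    then show ?thesis using that c z g.tr_inc unfolding snake_step_def by simp
  qed
  then show ?thesis using sn inj c z unfolding ouroboros_def by simp
qed


context
  fixes G :: "('a, 'b) monoid_scheme" and H :: "'a set" and T U :: "'a list" and \<phi> :: "nat \<Rightarrow> nat"
  assumes grp: "group G" and sg: "subgroup H G" and TH: "set T \<subseteq> H"
    and phok: "\<And>l. letter_ok U (\<phi> l) = letter_ok T l"
    and phval: "\<And>l. letter_ok T l \<Longrightarrow> letter_val G U (\<phi> l) = letter_val G T l"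
begin

lemma HG: "H \<subseteq> carrier G" using sg subgroup.subset by blast

lemma lvK: "letter_ok T l \<Longrightarrow> letter_val (G\<lparr>carrier := H\<rparr>) T l = letter_val G T l"
proof -
  assume "letter_ok T l"
  then have "T ! (l div 2) \<in> H" using TH unfolding letter_ok_def by auto
  then show ?thesis unfolding letter_val_def using group.m_inv_consistent[OF grp sg] by simp
qed

lemma lvH: "letter_ok T l \<Longrightarrow> letter_val G T l \<in> H"
proof -
  assume "letter_ok T l"
  then have "T ! (l div 2) \<in> H" using TH unfolding letter_ok_def by auto
  then show ?thesis unfolding letter_val_def using subgroup.m_inv_closed[OF sg] by simp
qed

lemma gok1_eq: "gok1 U (gmap \<phi> c) \<longleftrightarrow> gok1 T c"
  unfolding gok1_def dec_graph_gmap using phok by auto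

lemma edges_eq: "gok1 T c \<Longrightarrow> graph_edges G U (gmap \<phi> c) = graph_edges (G\<lparr>carrier := H\<rparr>) T c"
proof -
  assume g: "gok1 T c"
  have ok: "(a, a', l) \<in> set (snd (dec_graph c)) \<Longrightarrow> letter_ok T l" for a a' l
    using g unfolding gok1_def by fastforce
  show ?thesis
  proof (intro Set.set_eqI iffI)
    fix x assume "x \<in> graph_edges G U (gmap \<phi> c)"
    then obtain a a' l where x: "x = (a, a', letter_val G U (\<phi> l))" "(a, a', l) \<in> set (snd (dec_graph c))"
      unfolding graph_edges_def dec_graph_gmap by auto
    have "x = (a, a', letter_val (G\<lparr>carrier := H\<rparr>) T l)" using x(1) phval[OF ok[OF x(2)]] lvK[OF ok[OF x(2)]] by simp
    then show "x \<in> graph_edges (G\<lparr>carrier := H\<rparr>) T c" using x(2) unfolding graph_edges_def by blast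
  next
    fix x assume "x \<in> graph_edges (G\<lparr>carrier := H\<rparr>) T c"
    then obtain a a' l where x: "x = (a, a', letter_val (G\<lparr>carrier := H\<rparr>) T l)" "(a, a', l) \<in> set (snd (dec_graph c))"
      unfolding graph_edges_def by auto
    have "x = (a, a', letter_val G U (\<phi> l))" using x(1) phval[OF ok[OF x(2)]] lvK[OF ok[OF x(2)]] by simp
    moreover have "(a, a', \<phi> l) \<in> set (snd (dec_graph (gmap \<phi> c)))"
      unfolding dec_graph_gmap using x(2) by force
    ultimately show "x \<in> graph_edges G U (gmap \<phi> c)" unfolding graph_edges_def by blast
  qed
qed

lemma edge_vals: "gok1 T c \<Longrightarrow> (a, a', u) \<in> graph_edges (G\<lparr>carrier := H\<rparr>) T c \<Longrightarrow>
   u \<in> H \<and> u \<in> gen_set (G\<lparr>carrier := H\<rparr>) T \<and> u \<in> gen_set G U"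
proof -
  assume g: "gok1 T c" and e: "(a, a', u) \<in> graph_edges (G\<lparr>carrier := H\<rparr>) T c"
  then obtain l where l: "(a, a', l) \<in> set (snd (dec_graph c))" "u = letter_val (G\<lparr>carrier := H\<rparr>) T l"
    unfolding graph_edges_def by auto
  have ok: "letter_ok T l" using g l(1) unfolding gok1_def by fastforce
  have "u = letter_val G U (\<phi> l)" using l(2) lvK[OF ok] phval[OF ok] by simp
  moreover have "u \<in> H" using l(2) lvK[OF ok] lvH[OF ok] by simp
  moreover have "u \<in> gen_set (G\<lparr>carrier := H\<rparr>) T" using gen_mem[OF ok, of "G\<lparr>carrier := H\<rparr>"] l(2) by simp
  moreover have "letter_ok U (\<phi> l)" using phok ok by simp
  ultimately show ?thesis using gen_mem[of U "\<phi> l" G] by simp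
qed

lemma graph_ok_eq: "graph_ok G U (gmap \<phi> c) \<longleftrightarrow> graph_ok (G\<lparr>carrier := H\<rparr>) T c"
proof (cases "gok1 T c")
  case True
  have "inv\<^bsub>G\<lparr>carrier := H\<rparr>\<^esub> u = inv\<^bsub>G\<^esub> u" if "(a, a', u) \<in> graph_edges (G\<lparr>carrier := H\<rparr>) T c" for a a' u
    using edge_vals[OF True that] group.m_inv_consistent[OF grp sg] by simp
  then have "\<forall>x \<in> graph_edges (G\<lparr>carrier := H\<rparr>) T c.
     (case x of (a, a', u) \<Rightarrow> (a', a, inv\<^bsub>G\<^esub> u) \<in> graph_edges (G\<lparr>carrier := H\<rparr>) T c)
   = (case x of (a, a', u) \<Rightarrow> (a', a, inv\<^bsub>G\<lparr>carrier := H\<rparr>\<^esub> u) \<in> graph_edges (G\<lparr>carrier := H\<rparr>) T c)"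
    by clarsimp
  then have X: "(\<forall>(a, a', u) \<in> graph_edges (G\<lparr>carrier := H\<rparr>) T c. (a', a, inv\<^bsub>G\<^esub> u) \<in> graph_edges (G\<lparr>carrier := H\<rparr>) T c)
     = (\<forall>(a, a', u) \<in> graph_edges (G\<lparr>carrier := H\<rparr>) T c. (a', a, inv\<^bsub>G\<lparr>carrier := H\<rparr>\<^esub> u) \<in> graph_edges (G\<lparr>carrier := H\<rparr>) T c)"
    by (intro ball_cong[OF refl]) (rule bspec, assumption+)
  show ?thesis unfolding graph_ok_alt gok1_eq edges_eq[OF True] X by (rule refl)
next
  case False
  then show ?thesis unfolding graph_ok_alt gok1_eq by simp
qed

lemma verts_eq: "graph_vertices (gmap \<phi> c) = graph_vertices c"
  unfolding graph_vertices_def dec_graph_gmap by simp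


lemma step_eq:
  assumes BP: "\<forall>(a, a', u) \<in> B. u \<in> H \<and> u \<in> gen_set (G\<lparr>carrier := H\<rparr>) T \<and> u \<in> gen_set G U"
    and w: "\<omega> i \<in> H"
  shows "snake_step (G\<lparr>carrier := H\<rparr>) T B \<omega> \<zeta> i \<longleftrightarrow> snake_step G U B \<omega> \<zeta> i"
proof -
  have inc: "inv\<^bsub>G\<lparr>carrier := H\<rparr>\<^esub> (\<omega> i) \<otimes>\<^bsub>G\<lparr>carrier := H\<rparr>\<^esub> \<omega> (i + 1) = inv\<^bsub>G\<^esub> (\<omega> i) \<otimes>\<^bsub>G\<^esub> \<omega> (i + 1)"
    using group.m_inv_consistent[OF grp sg w] by simp
  show ?thesis unfolding snake_step_def inc using BP by blast
qed

lemma snake_eq: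
  assumes BP: "\<forall>(a, a', u) \<in> B. u \<in> H \<and> u \<in> gen_set (G\<lparr>carrier := H\<rparr>) T \<and> u \<in> gen_set G U"
    and w: "\<forall>i\<in>I. \<omega> i \<in> H"
  shows "snake_on (G\<lparr>carrier := H\<rparr>) T A B I \<omega> \<zeta> \<longleftrightarrow> snake_on G U A B I \<omega> \<zeta>"
proof -
  have "(\<forall>i. i \<in> I \<longrightarrow> i + 1 \<in> I \<longrightarrow> snake_step (G\<lparr>carrier := H\<rparr>) T B \<omega> \<zeta> i)
     = (\<forall>i. i \<in> I \<longrightarrow> i + 1 \<in> I \<longrightarrow> snake_step G U B \<omega> \<zeta> i)"
    using step_eq[OF BP] w by blast
  moreover have "(\<forall>i\<in>I. \<omega> i \<in> carrier (G\<lparr>carrier := H\<rparr>) \<and> \<zeta> i \<in> A) = (\<forall>i\<in>I. \<omega> i \<in> carrier G \<and> \<zeta> i \<in> A)"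
    using w HG by auto
  ultimately show ?thesis unfolding snake_on_def by simp
qed

lemma ouro_eq:
  assumes BP: "\<forall>(a, a', u) \<in> B. u \<in> H \<and> u \<in> gen_set (G\<lparr>carrier := H\<rparr>) T \<and> u \<in> gen_set G U"
    and w: "\<forall>i\<in>{0..n}. \<omega> i \<in> H"
  shows "ouroboros (G\<lparr>carrier := H\<rparr>) T A B n \<omega> \<zeta> \<longleftrightarrow> ouroboros G U A B n \<omega> \<zeta>"
proof -
  have "(\<forall>i. i \<in> {0..n} \<longrightarrow> i + 1 \<in> {0..n} \<longrightarrow> snake_step (G\<lparr>carrier := H\<rparr>) T B \<omega> \<zeta> i)
     = (\<forall>i. i \<in> {0..n} \<longrightarrow> i + 1 \<in> {0..n} \<longrightarrow> snake_step G U B \<omega> \<zeta> i)"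
    using step_eq[OF BP] w by blast
  moreover have "(\<forall>i\<in>{0..n}. \<omega> i \<in> carrier (G\<lparr>carrier := H\<rparr>) \<and> \<zeta> i \<in> A) = (\<forall>i\<in>{0..n}. \<omega> i \<in> carrier G \<and> \<zeta> i \<in> A)"
    using w HG by auto
  ultimately show ?thesis unfolding ouroboros_def by simp
qed

lemma step_H:
  assumes BP: "\<forall>(a, a', u) \<in> B. u \<in> H \<and> u \<in> gen_set (G\<lparr>carrier := H\<rparr>) T \<and> u \<in> gen_set G U"
    and st: "snake_step G U B \<omega> \<zeta> i" and c1: "\<omega> i \<in> carrier G" and c2: "\<omega> (i + 1) \<in> carrier G"
  shows "\<omega> i \<in> H \<longleftrightarrow> \<omega> (i + 1) \<in> H"
proof -
  interpret g: group G by (rule grp)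
  define u where "u = inv\<^bsub>G\<^esub> (\<omega> i) \<otimes>\<^bsub>G\<^esub> \<omega> (i + 1)"
  have uH: "u \<in> H" using st BP unfolding snake_step_def u_def by blast
  have uG: "u \<in> carrier G" using uH HG by blast
  have e1: "\<omega> (i + 1) = \<omega> i \<otimes>\<^bsub>G\<^esub> u"
    unfolding u_def using c1 c2 by (simp add: g.m_assoc[symmetric])
  have e2: "\<omega> i = \<omega> (i + 1) \<otimes>\<^bsub>G\<^esub> inv\<^bsub>G\<^esub> u"
    unfolding e1 using c1 uG by (simp add: g.m_assoc)
  show ?thesis
  proof
    assume "\<omega> i \<in> H" then show "\<omega> (i + 1) \<in> H" using e1 uH subgroup.m_closed[OF sg] by metis
  next
    assume "\<omega> (i + 1) \<in> H" then show "\<omega> i \<in> H" using e2 uH subgroup.m_closed[OF sg] subgroup.m_inv_closed[OF sg] by metis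
  qed
qed

lemma all_H_UNIV:
  assumes BP: "\<forall>(a, a', u) \<in> B. u \<in> H \<and> u \<in> gen_set (G\<lparr>carrier := H\<rparr>) T \<and> u \<in> gen_set G U"
    and sn: "snake_on G U A B UNIV \<omega> \<zeta>" and z: "\<omega> 0 \<in> H"
  shows "\<omega> i \<in> H"
proof -
  have st: "snake_step G U B \<omega> \<zeta> j" "\<omega> j \<in> carrier G" for j using sn unfolding snake_on_def by auto
  show ?thesis
  proof (induction i rule: int_induct[where k=0])
    case base then show ?case by (rule z)
  next
    case (step1 i) then show ?case using step_H[OF BP st(1) st(2) st(2)] by blast
  next
    case (step2 i) then show ?case using step_H[OF BP st(1)[of "i - 1"] st(2) st(2)] by simp
  qed
qed

lemma all_H_int:
  assumes BP: "\<forall>(a, a', u) \<in> B. u \<in> H \<and> u \<in> gen_set (G\<lparr>carrier := H\<rparr>) T \<and> u \<in> gen_set G U"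
    and st: "\<forall>i. i \<in> {0..n} \<longrightarrow> i + 1 \<in> {0..n} \<longrightarrow> snake_step G U B \<omega> \<zeta> i"
    and cr: "\<forall>i\<in>{0..n}. \<omega> i \<in> carrier G" and z: "\<omega> 0 \<in> H"
  shows "\<forall>i\<in>{0..n}. \<omega> i \<in> H"
proof -
  have "int k \<le> n \<longrightarrow> \<omega> (int k) \<in> H" for k
  proof (induction k)
    case 0 then show ?case using z by simp
  next
    case (Suc k)
    show ?case
    proof
      assume le: "int (Suc k) \<le> n"
      have "\<omega> (int k) \<in> H" using Suc le by simp
      moreover have "snake_step G U B \<omega> \<zeta> (int k)" using st le by simp
      moreover have "\<omega> (int k) \<in> carrier G" "\<omega> (int k + 1) \<in> carrier G" using cr le by auto
      ultimately have "\<omega> (int k + 1) \<in> H" using step_H[OF BP] by blast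
      then show "\<omega> (int (Suc k)) \<in> H" by (simp add: add.commute)
    qed
  qed
  then show ?thesis by (metis atLeastAtMost_iff nonneg_int_cases)
qed


lemma prep:
  assumes "graph_ok (G\<lparr>carrier := H\<rparr>) T c"
  shows "graph_edges G U (gmap \<phi> c) = graph_edges (G\<lparr>carrier := H\<rparr>) T c"
    and "\<forall>(a, a', u) \<in> graph_edges (G\<lparr>carrier := H\<rparr>) T c. u \<in> H \<and> u \<in> gen_set (G\<lparr>carrier := H\<rparr>) T \<and> u \<in> gen_set G U"
proof -
  have g: "gok1 T c" using assms graph_ok_alt by blast
  show "graph_edges G U (gmap \<phi> c) = graph_edges (G\<lparr>carrier := H\<rparr>) T c"
    by (rule edges_eq[OF g])
  show "\<forall>(a, a', u) \<in> graph_edges (G\<lparr>carrier := H\<rparr>) T c. u \<in> H \<and> u \<in> gen_set (G\<lparr>carrier := H\<rparr>) T \<and> u \<in> gen_set G U"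
    using edge_vals[OF g] by blast
qed

lemmas GOK = graph_ok_eq
lemmas VE = verts_eq
lemmas SE = snake_eq
lemmas OE = ouro_eq
lemmas AHU = all_H_UNIV
lemmas AHI = all_H_int

lemma tr_one: "x \<in> carrier G \<Longrightarrow> inv\<^bsub>G\<^esub> x \<otimes>\<^bsub>G\<^esub> x \<in> H"
  using group.l_inv[OF grp] subgroup.one_closed[OF sg] by simp

lemma P1: "c \<in> infinite_snake_problem (G\<lparr>carrier := H\<rparr>) T \<longleftrightarrow> gmap \<phi> c \<in> infinite_snake_problem G U"
proof (cases "graph_ok (G\<lparr>carrier := H\<rparr>) T c")
  case False then show ?thesis unfolding infinite_snake_problem_def using GOK by simp
next
  case True
  note S = prep[OF True]
  let ?A = "graph_vertices c" and ?B = "graph_edges (G\<lparr>carrier := H\<rparr>) T c"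
  have "(\<exists>\<omega> \<zeta>. snake_on (G\<lparr>carrier := H\<rparr>) T ?A ?B UNIV \<omega> \<zeta>) \<longleftrightarrow> (\<exists>\<omega> \<zeta>. snake_on G U ?A ?B UNIV \<omega> \<zeta>)"
  proof
    assume "\<exists>\<omega> \<zeta>. snake_on (G\<lparr>carrier := H\<rparr>) T ?A ?B UNIV \<omega> \<zeta>"
    then obtain \<omega> \<zeta> where s: "snake_on (G\<lparr>carrier := H\<rparr>) T ?A ?B UNIV \<omega> \<zeta>" by blast
    have "\<forall>i\<in>UNIV. \<omega> i \<in> H" using s unfolding snake_on_def by simp
    then have "snake_on G U ?A ?B UNIV \<omega> \<zeta>" using SE[OF S(2)] s by simp
    then show "\<exists>\<omega> \<zeta>. snake_on G U ?A ?B UNIV \<omega> \<zeta>" by blast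
  next
    assume "\<exists>\<omega> \<zeta>. snake_on G U ?A ?B UNIV \<omega> \<zeta>"
    then obtain \<omega> \<zeta> where s: "snake_on G U ?A ?B UNIV \<omega> \<zeta>" by blast
    have z: "\<omega> 0 \<in> carrier G" using s unfolding snake_on_def by simp
    let ?w = "\<lambda>i. inv\<^bsub>G\<^esub> (\<omega> 0) \<otimes>\<^bsub>G\<^esub> \<omega> i"
    have s': "snake_on G U ?A ?B UNIV ?w \<zeta>" by (rule tr_snake[OF grp s z])
    have "\<forall>i\<in>UNIV. ?w i \<in> H" using AHU[OF S(2) s' tr_one[OF z]] by blast
    then have "snake_on (G\<lparr>carrier := H\<rparr>) T ?A ?B UNIV ?w \<zeta>" using SE[OF S(2)] s' by simp
    then show "\<exists>\<omega> \<zeta>. snake_on (G\<lparr>carrier := H\<rparr>) T ?A ?B UNIV \<omega> \<zeta>" by blast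
  qed
  then show ?thesis unfolding infinite_snake_problem_def using GOK True S(1) VE by simp
qed

lemma P2: "c \<in> ouroboros_problem (G\<lparr>carrier := H\<rparr>) T \<longleftrightarrow> gmap \<phi> c \<in> ouroboros_problem G U"
proof (cases "graph_ok (G\<lparr>carrier := H\<rparr>) T c")
  case False then show ?thesis unfolding ouroboros_problem_def using GOK by simp
next
  case True
  note S = prep[OF True]
  let ?A = "graph_vertices c" and ?B = "graph_edges (G\<lparr>carrier := H\<rparr>) T c"
  have "(\<exists>n \<omega> \<zeta>. ouroboros (G\<lparr>carrier := H\<rparr>) T ?A ?B n \<omega> \<zeta>) \<longleftrightarrow> (\<exists>n \<omega> \<zeta>. ouroboros G U ?A ?B n \<omega> \<zeta>)"
  proof
    assume "\<exists>n \<omega> \<zeta>. ouroboros (G\<lparr>carrier := H\<rparr>) T ?A ?B n \<omega> \<zeta>"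
    then obtain n \<omega> \<zeta> where s: "ouroboros (G\<lparr>carrier := H\<rparr>) T ?A ?B n \<omega> \<zeta>" by blast
    have "\<forall>i\<in>{0..n}. \<omega> i \<in> H" using s unfolding ouroboros_def by simp
    then have "ouroboros G U ?A ?B n \<omega> \<zeta>" using OE[OF S(2)] s by simp
    then show "\<exists>n \<omega> \<zeta>. ouroboros G U ?A ?B n \<omega> \<zeta>" by blast
  next
    assume "\<exists>n \<omega> \<zeta>. ouroboros G U ?A ?B n \<omega> \<zeta>"
    then obtain n \<omega> \<zeta> where s: "ouroboros G U ?A ?B n \<omega> \<zeta>" by blast
    have z: "\<omega> 0 \<in> carrier G" using s unfolding ouroboros_def by simp
    let ?w = "\<lambda>i. inv\<^bsub>G\<^esub> (\<omega> 0) \<otimes>\<^bsub>G\<^esub> \<omega> i"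
    have s': "ouroboros G U ?A ?B n ?w \<zeta>" by (rule tr_ouro[OF grp s])
    have st: "\<forall>i. i \<in> {0..n} \<longrightarrow> i + 1 \<in> {0..n} \<longrightarrow> snake_step G U ?B ?w \<zeta> i"
      and cr: "\<forall>i\<in>{0..n}. ?w i \<in> carrier G" using s' unfolding ouroboros_def by auto
    have "\<forall>i\<in>{0..n}. ?w i \<in> H" using AHI[OF S(2) st cr tr_one[OF z]] by blast
    then have "ouroboros (G\<lparr>carrier := H\<rparr>) T ?A ?B n ?w \<zeta>" using OE[OF S(2)] s' by simp
    then show "\<exists>n \<omega> \<zeta>. ouroboros (G\<lparr>carrier := H\<rparr>) T ?A ?B n \<omega> \<zeta>" by blast
  qed
  then show ?thesis unfolding ouroboros_problem_def using GOK True S(1) VE by simp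
qed

lemma WV: "(\<forall>l\<in>set ws. letter_ok T l) \<Longrightarrow>
   word_val (G\<lparr>carrier := H\<rparr>) T ws = word_val G U (map \<phi> ws) \<and> word_val G U (map \<phi> ws) \<in> H"
proof (induction ws)
  case Nil then show ?case unfolding word_val_def using subgroup.one_closed[OF sg] by simp
next
  case (Cons l ws)
  have ok: "letter_ok T l" using Cons.prems by simp
  have IH: "word_val (G\<lparr>carrier := H\<rparr>) T ws = word_val G U (map \<phi> ws)" "word_val G U (map \<phi> ws) \<in> H"
    using Cons by auto
  have lv: "letter_val (G\<lparr>carrier := H\<rparr>) T l = letter_val G U (\<phi> l)" "letter_val G U (\<phi> l) \<in> H"
    using lvK[OF ok] phval[OF ok] lvH[OF ok] by auto
  have "word_val (G\<lparr>carrier := H\<rparr>) T (l # ws) = letter_val (G\<lparr>carrier := H\<rparr>) T l \<otimes>\<^bsub>G\<^esub> word_val (G\<lparr>carrier := H\<rparr>) T ws"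
    "word_val G U (map \<phi> (l # ws)) = letter_val G U (\<phi> l) \<otimes>\<^bsub>G\<^esub> word_val G U (map \<phi> ws)"
    unfolding word_val_def by simp_all
  then show ?case using IH lv subgroup.m_closed[OF sg] by simp
qed

lemma P3: "c \<in> snake_reachability_problem (G\<lparr>carrier := H\<rparr>) T \<longleftrightarrow> rmap \<phi> c \<in> snake_reachability_problem G U"
proof -
  obtain g r pc qc where d: "prod_decode c = (g, r)" "prod_decode r = (pc, qc)"
    by (metis surj_pair)
  have dr: "prod_decode (rmap \<phi> c) = (gmap \<phi> g, prod_encode (lmap \<phi> pc, lmap \<phi> qc))"
    using decode_rmap d by simp
  let ?P = "list_decode pc" and ?Q = "list_decode qc"
  have ld: "list_decode (lmap \<phi> pc) = map \<phi> ?P" "list_decode (lmap \<phi> qc) = map \<phi> ?Q"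
    by (simp_all add: lmap_eq)
  have lok: "(\<forall>l \<in> set (map \<phi> ?P) \<union> set (map \<phi> ?Q). letter_ok U l) \<longleftrightarrow> (\<forall>l \<in> set ?P \<union> set ?Q. letter_ok T l)"
    using phok by auto
  have L: "c \<in> snake_reachability_problem (G\<lparr>carrier := H\<rparr>) T \<longleftrightarrow>
     graph_ok (G\<lparr>carrier := H\<rparr>) T g \<and> (\<forall>l \<in> set ?P \<union> set ?Q. letter_ok T l) \<and>
       (\<exists>n \<omega> \<zeta>. n \<ge> 0 \<and> snake_on (G\<lparr>carrier := H\<rparr>) T (graph_vertices g) (graph_edges (G\<lparr>carrier := H\<rparr>) T g) {0..n} \<omega> \<zeta>
          \<and> \<omega> 0 = word_val (G\<lparr>carrier := H\<rparr>) T ?P \<and> \<omega> n = word_val (G\<lparr>carrier := H\<rparr>) T ?Q)"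
    unfolding snake_reachability_problem_def using d by simp
  have R: "rmap \<phi> c \<in> snake_reachability_problem G U \<longleftrightarrow>
     graph_ok G U (gmap \<phi> g) \<and> (\<forall>l \<in> set (map \<phi> ?P) \<union> set (map \<phi> ?Q). letter_ok U l) \<and>
       (\<exists>n \<omega> \<zeta>. n \<ge> 0 \<and> snake_on G U (graph_vertices (gmap \<phi> g)) (graph_edges G U (gmap \<phi> g)) {0..n} \<omega> \<zeta>
          \<and> \<omega> 0 = word_val G U (map \<phi> ?P) \<and> \<omega> n = word_val G U (map \<phi> ?Q))"
    unfolding snake_reachability_problem_def using dr ld by simp
  show ?thesis
  proof (cases "graph_ok (G\<lparr>carrier := H\<rparr>) T g \<and> (\<forall>l \<in> set ?P \<union> set ?Q. letter_ok T l)")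
    case False
    then show ?thesis unfolding L R lok GOK by blast
  next
    case True
    note S = prep[OF conjunct1[OF True]]
    let ?A = "graph_vertices g" and ?B = "graph_edges (G\<lparr>carrier := H\<rparr>) T g"
    have wP: "word_val (G\<lparr>carrier := H\<rparr>) T ?P = word_val G U (map \<phi> ?P)" "word_val G U (map \<phi> ?P) \<in> H"
      using WV True by auto
    have wQ: "word_val (G\<lparr>carrier := H\<rparr>) T ?Q = word_val G U (map \<phi> ?Q)"
      using WV True by auto
    let ?p = "word_val G U (map \<phi> ?P)" and ?q = "word_val G U (map \<phi> ?Q)"
    have "(\<exists>n \<omega> \<zeta>. n \<ge> 0 \<and> snake_on (G\<lparr>carrier := H\<rparr>) T ?A ?B {0..n} \<omega> \<zeta> \<and> \<omega> 0 = ?p \<and> \<omega> n = ?q)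
      \<longleftrightarrow> (\<exists>n \<omega> \<zeta>. n \<ge> 0 \<and> snake_on G U ?A ?B {0..n} \<omega> \<zeta> \<and> \<omega> 0 = ?p \<and> \<omega> n = ?q)"
    proof
      assume "\<exists>n \<omega> \<zeta>. n \<ge> 0 \<and> snake_on (G\<lparr>carrier := H\<rparr>) T ?A ?B {0..n} \<omega> \<zeta> \<and> \<omega> 0 = ?p \<and> \<omega> n = ?q"
      then obtain n \<omega> \<zeta> where s: "n \<ge> 0" "snake_on (G\<lparr>carrier := H\<rparr>) T ?A ?B {0..n} \<omega> \<zeta>" "\<omega> 0 = ?p" "\<omega> n = ?q"
        by blast
      have "\<forall>i\<in>{0..n}. \<omega> i \<in> H" using s unfolding snake_on_def by simp
      then have "snake_on G U ?A ?B {0..n} \<omega> \<zeta>" using SE[OF S(2)] s(2) by simp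
      then show "\<exists>n \<omega> \<zeta>. n \<ge> 0 \<and> snake_on G U ?A ?B {0..n} \<omega> \<zeta> \<and> \<omega> 0 = ?p \<and> \<omega> n = ?q"
        using s by blast
    next
      assume "\<exists>n \<omega> \<zeta>. n \<ge> 0 \<and> snake_on G U ?A ?B {0..n} \<omega> \<zeta> \<and> \<omega> 0 = ?p \<and> \<omega> n = ?q"
      then obtain n \<omega> \<zeta> where s: "n \<ge> 0" "snake_on G U ?A ?B {0..n} \<omega> \<zeta>" "\<omega> 0 = ?p" "\<omega> n = ?q"
        by blast
      have st: "\<forall>i. i \<in> {0..n} \<longrightarrow> i + 1 \<in> {0..n} \<longrightarrow> snake_step G U ?B \<omega> \<zeta> i"
        and cr: "\<forall>i\<in>{0..n}. \<omega> i \<in> carrier G" using s(2) unfolding snake_on_def by auto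
      have "\<forall>i\<in>{0..n}. \<omega> i \<in> H" using AHI[OF S(2) st cr] s(3) wP(2) by simp
      then have "snake_on (G\<lparr>carrier := H\<rparr>) T ?A ?B {0..n} \<omega> \<zeta>" using SE[OF S(2)] s(2) by simp
      then show "\<exists>n \<omega> \<zeta>. n \<ge> 0 \<and> snake_on (G\<lparr>carrier := H\<rparr>) T ?A ?B {0..n} \<omega> \<zeta> \<and> \<omega> 0 = ?p \<and> \<omega> n = ?q"
        using s by blast
    qed
    then show ?thesis unfolding L R lok GOK VE S(1) wP(1) wQ using True by blast
  qed
qed


end


theorem lemma1:
  fixes G :: "('a, 'b) monoid_scheme" and S T :: "'a list" and H :: "'a set" and w :: "nat list"
  assumes "group G"
    and "set S \<subseteq> carrier G" and "generate G (set S) = carrier G"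
    and "subgroup H G" and "set T \<subseteq> H" and "generate G (set T) = H"
    and "w \<noteq> []" and "\<forall>l \<in> set w. letter_ok S l"
  shows
    "many_one_reducible (infinite_snake_problem (G\<lparr>carrier := H\<rparr>) T) (infinite_snake_problem G (S @ T))
   \<and> many_one_reducible (ouroboros_problem (G\<lparr>carrier := H\<rparr>) T) (ouroboros_problem G (S @ T))
   \<and> many_one_reducible (snake_reachability_problem (G\<lparr>carrier := H\<rparr>) T) (snake_reachability_problem G (S @ T))
   \<and> many_one_reducible (infinite_snake_problem G S) (infinite_snake_problem G (S @ [word_val G S w]))
   \<and> many_one_reducible (ouroboros_problem G S) (ouroboros_problem G (S @ [word_val G S w]))
   \<and> many_one_reducible (snake_reachability_problem G S) (snake_reachability_problem G (S @ [word_val G S w]))"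
proof -
  note grp = assms(1)
  let ?\<phi> = "\<lambda>l. l + 2 * length S"
  have ok1: "letter_ok (S @ T) (?\<phi> l) = letter_ok T l" for l
    unfolding letter_ok_def by auto
  have val1: "letter_val G (S @ T) (?\<phi> l) = letter_val G T l" if "letter_ok T l" for l
    unfolding letter_val_def by (auto simp: nth_append)
  have c1: "computable (gmap ?\<phi>)" "computable (rmap ?\<phi>)"
    using U1_computable U1_gmap U1_rmap U1_plus by blast+
  have i1: "many_one_reducible (infinite_snake_problem (G\<lparr>carrier := H\<rparr>) T) (infinite_snake_problem G (S @ T))"
    unfolding many_one_reducible_def
    by (rule exI[of _ "gmap ?\<phi>"], rule conjI[OF c1(1)], rule allI, rule P1[OF grp assms(4,5)])
       (rule ok1, erule val1)
  have i2: "many_one_reducible (ouroboros_problem (G\<lparr>carrier := H\<rparr>) T) (ouroboros_problem G (S @ T))"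
    unfolding many_one_reducible_def
    by (rule exI[of _ "gmap ?\<phi>"], rule conjI[OF c1(1)], rule allI, rule P2[OF grp assms(4,5)])
       (rule ok1, erule val1)
  have i3: "many_one_reducible (snake_reachability_problem (G\<lparr>carrier := H\<rparr>) T) (snake_reachability_problem G (S @ T))"
    unfolding many_one_reducible_def
    by (rule exI[of _ "rmap ?\<phi>"], rule conjI[OF c1(2)], rule allI, rule P3[OF grp assms(4,5)])
       (rule ok1, erule val1)
  let ?x = "word_val G S w"
  let ?\<psi> = "\<lambda>l. if l < 2 * length S then l else l + 2"
  have ok2: "letter_ok (S @ [?x]) (?\<psi> l) = letter_ok S l" for l
    unfolding letter_ok_def by auto
  have val2: "letter_val G (S @ [?x]) (?\<psi> l) = letter_val G S l" if "letter_ok S l" for l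
    using that unfolding letter_val_def letter_ok_def by (auto simp: nth_append)
  have c2: "computable (gmap ?\<psi>)" "computable (rmap ?\<psi>)"
    using U1_computable U1_gmap U1_rmap U1_ifless by blast+
  have sg: "subgroup (carrier G) G" by (rule group.subgroup_self[OF grp])
  have GG: "G\<lparr>carrier := carrier G\<rparr> = G" by simp
  have ii1: "many_one_reducible (infinite_snake_problem G S) (infinite_snake_problem G (S @ [?x]))"
    unfolding many_one_reducible_def
    by (rule exI[of _ "gmap ?\<psi>"], rule conjI[OF c2(1)], rule allI, rule P1[OF grp sg assms(2), unfolded GG])
       (rule ok2, erule val2)
  have ii2: "many_one_reducible (ouroboros_problem G S) (ouroboros_problem G (S @ [?x]))"
    unfolding many_one_reducible_def
    by (rule exI[of _ "gmap ?\<psi>"], rule conjI[OF c2(1)], rule allI, rule P2[OF grp sg assms(2), unfolded GG])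
       (rule ok2, erule val2)
  have ii3: "many_one_reducible (snake_reachability_problem G S) (snake_reachability_problem G (S @ [?x]))"
    unfolding many_one_reducible_def
    by (rule exI[of _ "rmap ?\<psi>"], rule conjI[OF c2(2)], rule allI, rule P3[OF grp sg assms(2), unfolded GG])
       (rule ok2, erule val2)
  show ?thesis using i1 i2 i3 ii1 ii2 ii3 by blast
qed

end
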